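(* Let $D\ge3$, $3\le k\le D$, and let $\mathbf a:\mathbb R^D\to\mathcal H$ define a CMF dictionary with kernel $\varphi(\|\cdot-\cdot\|_p^p)$, where $\varphi$ is moreover right-differentiable at $0$ (finite right derivative). Then there exists $x_0>0$ such that for every $\Delta>0$ with $\Delta^p<x_0$ and every points $\theta^\star_1,\dots,\theta^\star_k\in\mathbb R^D$ satisfying $\|\theta^\star_\ell-\theta^\star_{\ell'}\|_p^p=2\Delta^p$ for $\ell\ne\ell'$ and $\|\theta^\star_\ell\|_p^p=\Delta^p$ for all $\ell$, the vector $\mathbf y=\sum_{\ell=1}^k\mathbf a(\theta^\star_\ell)$ satisfies $|\langle\mathbf a(\mathbf 0),\mathbf y\rangle|>|\langle\mathbf a(\theta^\star_\ell),\mathbf y\rangle|$ for every $\ell$; hence OMP with input $\mathbf y$ selects a parameter not in $\{\theta^\star_\ell\}_{\ell=1}^k$ at the first iteration. In the special case $\varphi(t)=e^{-\lambda t}$ ($\lambda>0$) this holds whenever $0<\Delta^p<\lambda^{-1}\log(k-1)$.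
   Context: CMF: $\varphi:[0,\infty)\to\mathbb R$ infinitely differentiable on $(0,\infty)$, right-continuous at $0$, $(-1)^n\varphi^{(n)}(x)\ge0$ for $x>0$, $n\ge0$. A CMF dictionary in dimension $D$ is $\mathbf a:\mathbb R^D\to\mathcal H$ ($\mathcal H$ real Hilbert) with $\langle\mathbf a(\theta),\mathbf a(\theta')\rangle=\varphi(\|\theta-\theta'\|_p^p)$, $\varphi$ a CMF, $\varphi(0)=1$, $\lim_{x\to\infty}\varphi(x)=0$, $0<p\le1$, $\|\theta\|_p^p=\sum_d|\theta[d]|^p$. The first OMP iteration with input $\mathbf y$ selects some element of $\arg\max_\theta|\langle\mathbf a(\theta),\mathbf y\rangle|$. *)

theory Defs
  imports "HOL-Analysis.Analysis"
begin

text \<open>Completely monotone function (CMF) on [0,inf): infinitely differentiable on (0,inf),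
  right-continuous at 0, and (-1)^n phi^(n)(x) \<ge> 0 for x > 0 and all n.
  Only the values of phi on [0,inf) are relevant.\<close>
definition CMF :: "(real \<Rightarrow> real) \<Rightarrow> bool" where
  "CMF \<phi> \<longleftrightarrow>
     (\<phi> \<longlongrightarrow> \<phi> 0) (at_right 0) \<and>
     (\<forall>n x. 0 < x \<longrightarrow> (deriv ^^ n) \<phi> differentiable (at x)) \<and>
     (\<forall>n x. 0 < x \<longrightarrow> (-1) ^ n * (deriv ^^ n) \<phi> x \<ge> 0)"

definition pnorm_pow :: "real \<Rightarrow> real ^ 'd \<Rightarrow> real" where
  "pnorm_pow p \<theta> = (\<Sum>i\<in>UNIV. \<bar>\<theta> $ i\<bar> powr p)"

definition CMF_dictionary ::
  "(real \<Rightarrow> real) \<Rightarrow> real \<Rightarrow> (real ^ 'd \<Rightarrow> 'h::real_inner) \<Rightarrow> bool" where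
  "CMF_dictionary \<phi> p a \<longleftrightarrow>
     CMF \<phi> \<and> \<phi> 0 = 1 \<and> (\<phi> \<longlongrightarrow> 0) at_top \<and> 0 < p \<and> p \<le> 1 \<and>
     (\<forall>\<theta> \<theta>'. inner (a \<theta>) (a \<theta>') = \<phi> (pnorm_pow p (\<theta> - \<theta>')))"

text \<open>Parameters that the first OMP iteration may select with input y:
  the maximisers of |<a(\<theta>), y>|.\<close>
definition omp_first_choices :: "(real ^ 'd \<Rightarrow> 'h::real_inner) \<Rightarrow> 'h \<Rightarrow> (real ^ 'd) set" where
  "omp_first_choices a y = {\<theta>. \<forall>\<theta>'. \<bar>inner (a \<theta>') y\<bar> \<le> \<bar>inner (a \<theta>) y\<bar>}"

end

theory Submission
  imports Defs
begin

lemma phi_small: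
  fixes \<phi> :: "real \<Rightarrow> real" and K :: real
  assumes cmf: "CMF \<phi>" and p0: "\<phi> 0 = 1" and lim: "(\<phi> \<longlongrightarrow> 0) at_top"
    and rd: "(\<phi> has_real_derivative d) (at 0 within {0..})" and K: "K > 2"
  shows "\<exists>x0>0. \<forall>x. 0 < x \<longrightarrow> x < x0 \<longrightarrow> 1 + (K - 1) * \<phi> (2*x) < K * \<phi> x"
proof -
  have dif0: "\<phi> differentiable (at x)" if "x > 0" for x
    using cmf that unfolding CMF_def by (metis funpow_0)
  have D1: "DERIV \<phi> x :> deriv \<phi> x" if "x > 0" for x
    using dif0[OF that] DERIV_deriv_iff_real_differentiable by blast
  have D2: "DERIV (deriv \<phi>) x :> deriv (deriv \<phi>) x" if "x > 0" for x
  proof -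
    have "(deriv ^^ 1) \<phi> differentiable (at x)" using cmf that unfolding CMF_def by blast
    then show ?thesis using DERIV_deriv_iff_real_differentiable by simp
  qed
  have D2nn: "deriv (deriv \<phi>) x \<ge> 0" if "x > 0" for x
  proof -
    have "(-1) ^ 2 * (deriv ^^ 2) \<phi> x \<ge> 0" using cmf that unfolding CMF_def by blast
    then show ?thesis by (simp add: numeral_2_eq_2)
  qed
  have mono: "deriv \<phi> s \<le> deriv \<phi> t" if "0 < s" "s \<le> t" for s t
  proof (rule DERIV_nonneg_imp_nondecreasing[OF that(2)])
    fix x assume "s \<le> x" "x \<le> t"
    then have "x > 0" using that by simp
    then show "\<exists>y. DERIV (deriv \<phi>) x :> y \<and> y \<ge> 0" using D2 D2nn by blast
  qed
  have cont: "continuous_on {0..t} \<phi>" for t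
  proof -
    have c0: "continuous (at 0 within {0..}) \<phi>" using DERIV_continuous[OF rd] .
    show ?thesis unfolding continuous_on_eq_continuous_within
    proof
      fix x assume x: "x \<in> {0..t}"
      show "continuous (at x within {0..t}) \<phi>"
      proof (cases "x = 0")
        case True
        then show ?thesis using c0 continuous_within_subset by fastforce
      next
        case False
        then have "x > 0" using x by auto
        then show ?thesis using dif0 differentiable_imp_continuous_within
          by (metis continuous_at_imp_continuous_at_within)
      qed
    qed
  qed
  define q where "q h = (\<phi> h - 1) / h" for h
  have qlim: "(q \<longlongrightarrow> d) (at_right 0)"
  proof -
    have "((\<lambda>y. (\<phi> y - \<phi> 0) / (y - 0)) \<longlongrightarrow> d) (at 0 within {0..})"
      using rd has_field_derivative_iff by blast
    then have "((\<lambda>y. (\<phi> y - \<phi> 0) / (y - 0)) \<longlongrightarrow> d) (at 0 within {0<..})"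
      by (rule tendsto_within_subset) auto
    then show ?thesis unfolding q_def using p0 by simp
  qed
  have mvt: "\<exists>z. 0 < z \<and> z < t \<and> \<phi> t - 1 = t * deriv \<phi> z" if tp: "t > 0" for t
  proof -
    obtain l z where "0 < z" "z < t" "DERIV \<phi> z :> l" "\<phi> t - \<phi> 0 = (t - 0) * l"
      using MVT[OF tp cont] dif0 by blast
    then show ?thesis using D1 DERIV_unique p0 by fastforce
  qed
  have dle: "d \<le> deriv \<phi> x" if "x > 0" for x
  proof (rule tendsto_le[OF _ tendsto_const qlim])
    show "at_right (0::real) \<noteq> bot" by simp
    show "\<forall>\<^sub>F t in at_right 0. q t \<le> deriv \<phi> x"
      unfolding eventually_at_right_field
    proof (intro exI[of _ x] conjI allI impI)
      fix t :: real assume t: "0 < t" "t < x"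
      obtain z where z: "0 < z" "z < t" "\<phi> t - 1 = t * deriv \<phi> z" using mvt t by blast
      have "deriv \<phi> z \<le> deriv \<phi> x" using mono z t by simp
      then show "q t \<le> deriv \<phi> x" unfolding q_def using z t by (simp add: divide_simps)
    qed (use that in auto)
  qed
  have dneg: "d < 0"
  proof (rule ccontr)
    assume "\<not> d < 0"
    then have ge: "\<phi> x \<ge> 1" if xp: "x > 0" for x
    proof -
      obtain z where z: "0 < z" "z < x" "\<phi> x - 1 = x * deriv \<phi> z" using mvt xp by blast
      have "deriv \<phi> z \<ge> 0" using dle[OF z(1)] \<open>\<not> d < 0\<close> by simp
      then have "x * deriv \<phi> z \<ge> 0" using xp by simp
      then show ?thesis using z by linarith
    qed
    have "\<forall>\<^sub>F x in at_top. \<phi> x < 1/2" using order_tendstoD(2)[OF lim, of "1/2"] by simp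
    then obtain N where N: "\<And>x. x \<ge> N \<Longrightarrow> \<phi> x < 1/2"
      unfolding eventually_at_top_linorder by blast
    have "\<phi> (max N 1) < 1/2" using N by simp
    moreover have "\<phi> (max N 1) \<ge> 1" using ge by simp
    ultimately show False by simp
  qed
  have two: "filterlim (\<lambda>x. 2 * x) (at_right 0) (at_right (0::real))"
    unfolding filterlim_at
  proof
    show "\<forall>\<^sub>F x in at_right 0. 2 * x \<in> {0<..} \<and> 2 * x \<noteq> (0::real)"
      unfolding eventually_at_right_field by (intro exI[of _ 1]) auto
    have "((\<lambda>x. 2 * x) \<longlongrightarrow> 2 * (0::real)) (at_right 0)"
      by (intro tendsto_mult tendsto_const tendsto_ident_at)
    then show "((\<lambda>x. 2 * x) \<longlongrightarrow> (0::real)) (at_right 0)" by simp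
  qed
  have "((\<lambda>x. K * q x - 2 * (K - 1) * q (2 * x)) \<longlongrightarrow> K * d - 2 * (K - 1) * d) (at_right 0)"
    by (intro tendsto_diff tendsto_mult tendsto_const qlim filterlim_compose[OF qlim two])
  moreover have "K * d - 2 * (K - 1) * d > 0"
  proof -
    have "K * d - 2 * (K - 1) * d = (2 - K) * d" by algebra
    then show ?thesis using K dneg by (simp add: mult_neg_neg)
  qed
  ultimately have "\<forall>\<^sub>F x in at_right 0. K * q x - 2 * (K - 1) * q (2 * x) > 0"
    using order_tendstoD(1) by blast
  then obtain b where b: "b > 0" "\<forall>x>0. x < b \<longrightarrow> K * q x - 2 * (K - 1) * q (2 * x) > 0"
    unfolding eventually_at_right_field by auto
  show ?thesis
  proof (intro exI[of _ b] conjI allI impI)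
    fix x :: real assume x: "0 < x" "x < b"
    have pos: "x * (K * q x - 2 * (K - 1) * q (2 * x)) > 0" using b x by simp
    have "x * (K * q x - 2 * (K - 1) * q (2 * x)) = K * \<phi> x - (K - 1) * \<phi> (2*x) - 1"
      unfolding q_def using x by (simp add: field_simps)
    then show "1 + (K - 1) * \<phi> (2*x) < K * \<phi> x" using pos by simp
  qed (use b in auto)
qed

lemma pnorm_pow_neg: "pnorm_pow p (- \<theta>) = pnorm_pow p \<theta>"
  by (simp add: pnorm_pow_def)

lemma core:
  fixes a :: "real ^ 'd \<Rightarrow> 'h::real_inner" and \<phi> :: "real \<Rightarrow> real"
  assumes inn: "\<forall>\<theta> \<theta>'. inner (a \<theta>) (a \<theta>') = \<phi> (pnorm_pow p (\<theta> - \<theta>'))"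
    and p0: "\<phi> 0 = 1" and nn: "\<phi> (2 * x) \<ge> 0" and k: "k \<ge> 1"
    and ineq: "1 + (real k - 1) * \<phi> (2 * x) < real k * \<phi> x"
    and H1: "\<forall>l\<in>{1..k}. \<forall>l'\<in>{1..k}. l \<noteq> l' \<longrightarrow> pnorm_pow p (\<theta>s l - \<theta>s l') = 2 * x"
    and H2: "\<forall>l\<in>{1..k}. pnorm_pow p (\<theta>s l) = x"
  shows "(let y = (\<Sum>l=1..k. a (\<theta>s l)) in
              (\<forall>l\<in>{1..k}. \<bar>inner (a 0) y\<bar> > \<bar>inner (a (\<theta>s l)) y\<bar>) \<and>
              omp_first_choices a y \<inter> \<theta>s ` {1..k} = {})"
proof -
  define y where "y = (\<Sum>l=1..k. a (\<theta>s l))"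
  have i0: "inner (a 0) y = real k * \<phi> x"
  proof -
    have "inner (a 0) y = (\<Sum>l=1..k. inner (a 0) (a (\<theta>s l)))"
      unfolding y_def by (simp add: inner_sum_right)
    also have "\<dots> = (\<Sum>l=1..k. \<phi> x)"
      by (rule sum.cong) (use inn H2 in \<open>auto simp: pnorm_pow_neg\<close>)
    finally show ?thesis by simp
  qed
  have il: "inner (a (\<theta>s l)) y = 1 + (real k - 1) * \<phi> (2 * x)" if l: "l \<in> {1..k}" for l
  proof -
    have "inner (a (\<theta>s l)) y = (\<Sum>l'=1..k. inner (a (\<theta>s l)) (a (\<theta>s l')))"
      unfolding y_def by (simp add: inner_sum_right)
    also have "\<dots> = inner (a (\<theta>s l)) (a (\<theta>s l)) + (\<Sum>l'\<in>{1..k}-{l}. inner (a (\<theta>s l)) (a (\<theta>s l')))"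
      using l by (simp add: sum.remove)
    also have "(\<Sum>l'\<in>{1..k}-{l}. inner (a (\<theta>s l)) (a (\<theta>s l'))) = (\<Sum>l'\<in>{1..k}-{l}. \<phi> (2 * x))"
      by (rule sum.cong) (use inn H1 l in auto)
    also have "\<dots> = (real k - 1) * \<phi> (2 * x)"
      using l k by (simp add: of_nat_diff)
    also have "inner (a (\<theta>s l)) (a (\<theta>s l)) = 1"
      using inn p0 by (simp add: pnorm_pow_def)
    finally show ?thesis .
  qed
  have pos: "1 + (real k - 1) * \<phi> (2 * x) \<ge> 1" using k nn by simp
  have gt: "\<bar>inner (a 0) y\<bar> > \<bar>inner (a (\<theta>s l)) y\<bar>" if "l \<in> {1..k}" for l
    using i0 il[OF that] pos ineq by simp
  have "omp_first_choices a y \<inter> \<theta>s ` {1..k} = {}"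
  proof (rule ccontr)
    assume "omp_first_choices a y \<inter> \<theta>s ` {1..k} \<noteq> {}"
    then obtain l where l: "l \<in> {1..k}" "\<theta>s l \<in> omp_first_choices a y" by blast
    then have "\<bar>inner (a 0) y\<bar> \<le> \<bar>inner (a (\<theta>s l)) y\<bar>" unfolding omp_first_choices_def by blast
    with gt[OF l(1)] show False by simp
  qed
  then show ?thesis using gt unfolding y_def[symmetric] Let_def by blast
qed

lemma exp_ineq:
  fixes lam x K :: real
  assumes "lam > 0" "x > 0" "K > 2" "x < ln (K - 1) / lam"
  shows "1 + (K - 1) * exp (- lam * (2 * x)) < K * exp (- lam * x)"
proof -
  define u where "u = exp (- lam * x)"
  have u2: "exp (- lam * (2 * x)) = u * u" unfolding u_def by (simp flip: exp_add)
  have "lam * x < ln (K - 1)" using assms by (simp add: field_simps)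
  then have "exp (lam * x) < K - 1" using assms(3) by (metis exp_less_cancel_iff exp_ln diff_gt_0_iff_gt less_trans one_less_numeral_iff semiring_norm(76))
  moreover have "u * exp (lam * x) = 1" unfolding u_def by (simp flip: exp_add)
  moreover have "u > 0" unfolding u_def by simp
  ultimately have a1: "(K - 1) * u - 1 > 0"
    by (metis diff_gt_0_iff_gt mult.commute mult_strict_left_mono)
  have "u < 1" unfolding u_def using assms by simp
  then have "((K - 1) * u - 1) * (1 - u) > 0" using a1 by simp
  then show ?thesis unfolding u2 u_def[symmetric] by (simp add: algebra_simps)
qed

theorem mainTheorem16:
  fixes a :: "real ^ 'd \<Rightarrow> 'h::{real_inner, complete_space}"
    and \<phi> :: "real \<Rightarrow> real" and p :: real and k :: nat
  assumes D: "CARD('d) \<ge> 3"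
    and k: "3 \<le> k" "k \<le> CARD('d)"
    and dict: "CMF_dictionary \<phi> p a"
    and rdiff: "\<exists>d. (\<phi> has_real_derivative d) (at 0 within {0..})"
  shows
    "(\<exists>x0>0. \<forall>\<Delta>>0. \<Delta> powr p < x0 \<longrightarrow>
        (\<forall>\<theta>s :: nat \<Rightarrow> real ^ 'd.
           (\<forall>l\<in>{1..k}. \<forall>l'\<in>{1..k}. l \<noteq> l' \<longrightarrow> pnorm_pow p (\<theta>s l - \<theta>s l') = 2 * \<Delta> powr p) \<and>
           (\<forall>l\<in>{1..k}. pnorm_pow p (\<theta>s l) = \<Delta> powr p) \<longrightarrow>
           (let y = (\<Sum>l=1..k. a (\<theta>s l)) in
              (\<forall>l\<in>{1..k}. \<bar>inner (a 0) y\<bar> > \<bar>inner (a (\<theta>s l)) y\<bar>) \<and>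
              omp_first_choices a y \<inter> \<theta>s ` {1..k} = {})))
     \<and>
     (\<forall>lam>0. (\<forall>t\<ge>0. \<phi> t = exp (- lam * t)) \<longrightarrow>
        (\<forall>\<Delta>>0. \<Delta> powr p < ln (real k - 1) / lam \<longrightarrow>
        (\<forall>\<theta>s :: nat \<Rightarrow> real ^ 'd.
           (\<forall>l\<in>{1..k}. \<forall>l'\<in>{1..k}. l \<noteq> l' \<longrightarrow> pnorm_pow p (\<theta>s l - \<theta>s l') = 2 * \<Delta> powr p) \<and>
           (\<forall>l\<in>{1..k}. pnorm_pow p (\<theta>s l) = \<Delta> powr p) \<longrightarrow>
           (let y = (\<Sum>l=1..k. a (\<theta>s l)) in
              (\<forall>l\<in>{1..k}. \<bar>inner (a 0) y\<bar> > \<bar>inner (a (\<theta>s l)) y\<bar>) \<and>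
              omp_first_choices a y \<inter> \<theta>s ` {1..k} = {}))))"
proof -
  have cmf: "CMF \<phi>" and p0: "\<phi> 0 = 1" and lim: "(\<phi> \<longlongrightarrow> 0) at_top"
    and pp: "0 < p" and inn: "\<forall>\<theta> \<theta>'. inner (a \<theta>) (a \<theta>') = \<phi> (pnorm_pow p (\<theta> - \<theta>'))"
    using dict unfolding CMF_dictionary_def by auto
  have nn: "\<phi> t \<ge> 0" if "t > 0" for t
  proof -
    have "(-1) ^ 0 * (deriv ^^ 0) \<phi> t \<ge> 0" using cmf that unfolding CMF_def by blast
    then show ?thesis by simp
  qed
  have k1: "k \<ge> 1" and K: "real k > 2" using k by auto
  obtain d where rd: "(\<phi> has_real_derivative d) (at 0 within {0..})" using rdiff by blast
  obtain x0 where x0: "x0 > 0" "\<forall>x. 0 < x \<longrightarrow> x < x0 \<longrightarrow> 1 + (real k - 1) * \<phi> (2*x) < real k * \<phi> x"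
    using phi_small[OF cmf p0 lim rd K] by blast
  show ?thesis
  proof (intro conjI exI[of _ x0] allI impI)
    show "x0 > 0" by (rule x0(1))
  next
    fix \<Delta> :: real and \<theta>s :: "nat \<Rightarrow> real ^ 'd"
    assume D0: "\<Delta> > 0" and Dx: "\<Delta> powr p < x0"
      and H: "(\<forall>l\<in>{1..k}. \<forall>l'\<in>{1..k}. l \<noteq> l' \<longrightarrow> pnorm_pow p (\<theta>s l - \<theta>s l') = 2 * \<Delta> powr p) \<and>
           (\<forall>l\<in>{1..k}. pnorm_pow p (\<theta>s l) = \<Delta> powr p)"
    have xp: "\<Delta> powr p > 0" using D0 by simp
    show "let y = (\<Sum>l=1..k. a (\<theta>s l)) in
              (\<forall>l\<in>{1..k}. \<bar>inner (a 0) y\<bar> > \<bar>inner (a (\<theta>s l)) y\<bar>) \<and>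
              omp_first_choices a y \<inter> \<theta>s ` {1..k} = {}"
      by (rule core[OF inn p0 _ k1]) (use H xp Dx x0 nn in auto)
  next
    fix lam :: real and \<Delta> :: real and \<theta>s :: "nat \<Rightarrow> real ^ 'd"
    assume l0: "lam > 0" and ex: "\<forall>t\<ge>0. \<phi> t = exp (- lam * t)" and D0: "\<Delta> > 0"
      and Dx: "\<Delta> powr p < ln (real k - 1) / lam"
      and H: "(\<forall>l\<in>{1..k}. \<forall>l'\<in>{1..k}. l \<noteq> l' \<longrightarrow> pnorm_pow p (\<theta>s l - \<theta>s l') = 2 * \<Delta> powr p) \<and>
           (\<forall>l\<in>{1..k}. pnorm_pow p (\<theta>s l) = \<Delta> powr p)"
    have xp: "\<Delta> powr p > 0" using D0 by simp
    have ie: "1 + (real k - 1) * exp (- lam * (2 * \<Delta> powr p)) < real k * exp (- lam * \<Delta> powr p)"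
      by (rule exp_ineq[OF l0 xp K Dx])
    have ie2: "1 + (real k - 1) * \<phi> (2 * \<Delta> powr p) < real k * \<phi> (\<Delta> powr p)"
      using ie ex xp by simp
    show "let y = (\<Sum>l=1..k. a (\<theta>s l)) in
              (\<forall>l\<in>{1..k}. \<bar>inner (a 0) y\<bar> > \<bar>inner (a (\<theta>s l)) y\<bar>) \<and>
              omp_first_choices a y \<inter> \<theta>s ` {1..k} = {}"
      by (rule core[OF inn p0 _ k1 ie2]) (use H xp nn in auto)
  qed
qed

end
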